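(* Let $\mathfrak{H}$ be a fat indecomposable Hoffman graph with $\lambda_{\min}(\mathfrak{H})\ge-1-\tau$, where $\tau=\frac{1+\sqrt5}{2}$, and with at most two slim vertices. Then $\mathfrak{H}$ is isomorphic to one of $\mathfrak{H}_{\rm I}$, $\mathfrak{H}_{\rm II}$, $\mathfrak{H}_{\rm III}$, $\mathfrak{H}_{\rm IV}$, $\mathfrak{H}_{\rm XVI}$, $\mathfrak{H}_{\rm XVII}$.
   Context: A Hoffman graph $\mathfrak{H}$ is a finite simple graph $H$ together with a labeling of each vertex as slim or fat, such that every fat vertex is adjacent to at least one slim vertex and the fat vertices are pairwise non-adjacent. $V^s(\mathfrak{H})$ denotes the set of slim vertices and $N^f_{\mathfrak{H}}(x)$ the set of fat neighbours of $x$. $\mathfrak{H}$ is fat if every slim vertex has a fat neighbour. Isomorphisms are graph isomorphisms preserving labels. An induced Hoffman subgraph is a Hoffman graph whose underlying graph is an induced subgraph with inherited labels. Writing the adjacency matrix of $H$ with fat vertices last as $\begin{pmatrix}A_s & C\\ C^T & O\end{pmatrix}$, set $B(\mathfrak{H})=A_s-CC^T$; $\lambda_{\min}(\mathfrak{H})$ is its smallest eigenvalue. A decomposition of $\mathfrak{H}$ is a family $\{\mathfrak{H}^i\}_{i=1}^n$ of induced Hoffman subgraphs such that: (i) $V(\mathfrak{H})=\bigcup_i V(\mathfrak{H}^i)$; (ii) slim vertex sets of distinct members are disjoint; (iii) if $x\in V^s(\mathfrak{H}^i)$ and $y$ is a fat neighbour of $x$ in $\mathfrak{H}$, then $y\in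 V(\mathfrak{H}^i)$; (iv) if $x\in V^s(\mathfrak{H}^i)$, $y\in V^s(\mathfrak{H}^j)$, $i\neq j$, then $|N^f_{\mathfrak{H}}(x)\cap N^f_{\mathfrak{H}}(y)|\le 1$, with equality iff $x,y$ are adjacent. $\mathfrak{H}$ is indecomposable if it has no decomposition with $n\ge 2$. Named Hoffman graphs (slim vertices $v_i$, fat vertices $f_j$): $\mathfrak{H}_{\rm I}$: slim $v_1$, fat $f_1$, edge $v_1f_1$. $\mathfrak{H}_{\rm II}$: slim $v_1$, fat $f_1,f_2$, edges $v_1f_1,v_1f_2$. $\mathfrak{H}_{\rm III}$: slim $v_1,v_2$, fat $f_1$, edges $v_1f_1,v_2f_1$. $\mathfrak{H}_{\rm IV}$: slim $v_1,v_2$, fat $f_1,f_2$, edges $v_1v_2,v_1f_1,v_2f_2$. $\mathfrak{H}_{\rm XVI}$: slim $v_1,v_2$, fat $f_1,f_2,f_3$, edges $v_1v_2,v_1f_1,v_1f_2,v_2f_3$. $\mathfrak{H}_{\rm XVII}$: slim $v_1,v_2$, fat $f_1,f_2$, edges $v_1f_1,v_1f_2,v_2f_2$. *)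

theory Defs
  imports Complex_Main
begin

record 'a hgraph =
  verts :: "'a set"
  adj :: "'a \<Rightarrow> 'a \<Rightarrow> bool"
  fatv :: "'a set"

definition slimv :: "('a, 'b) hgraph_scheme \<Rightarrow> 'a set" where
  "slimv H = verts H - fatv H"

definition fat_nbrs :: "('a, 'b) hgraph_scheme \<Rightarrow> 'a \<Rightarrow> 'a set" where
  "fat_nbrs H x = {f \<in> fatv H. adj H x f}"

definition hoffman_graph :: "('a, 'b) hgraph_scheme \<Rightarrow> bool" where
  "hoffman_graph H \<longleftrightarrow>
     finite (verts H) \<and> verts H \<noteq> {} \<and> fatv H \<subseteq> verts H \<and>
     (\<forall>x y. adj H x y \<longrightarrow> x \<in> verts H \<and> y \<in> verts H) \<and>
     (\<forall>x y. adj H x y \<longrightarrow> adj H y x) \<and>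
     (\<forall>x. \<not> adj H x x) \<and>
     (\<forall>f\<in>fatv H. \<exists>x\<in>slimv H. adj H f x) \<and>
     (\<forall>f\<in>fatv H. \<forall>g\<in>fatv H. \<not> adj H f g)"

definition fat_hoffman :: "('a, 'b) hgraph_scheme \<Rightarrow> bool" where
  "fat_hoffman H \<longleftrightarrow> (\<forall>x\<in>slimv H. fat_nbrs H x \<noteq> {})"

definition induced :: "('a, 'b) hgraph_scheme \<Rightarrow> 'a set \<Rightarrow> 'a hgraph" where
  "induced H W = \<lparr>verts = W, adj = (\<lambda>x y. adj H x y \<and> x \<in> W \<and> y \<in> W),
                  fatv = fatv H \<inter> W\<rparr>"

text \<open>B(H) = A_s - C C^T, as a function on slim vertices.\<close>
definition Bmat :: "('a, 'b) hgraph_scheme \<Rightarrow> 'a \<Rightarrow> 'a \<Rightarrow> real" where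
  "Bmat H x y = (if adj H x y then 1 else 0) - real (card (fat_nbrs H x \<inter> fat_nbrs H y))"

definition is_eigenvalue_B :: "('a, 'b) hgraph_scheme \<Rightarrow> real \<Rightarrow> bool" where
  "is_eigenvalue_B H \<mu> \<longleftrightarrow>
     (\<exists>v :: 'a \<Rightarrow> real. (\<exists>x\<in>slimv H. v x \<noteq> 0) \<and>
        (\<forall>x\<in>slimv H. (\<Sum>y\<in>slimv H. Bmat H x y * v y) = \<mu> * v x))"

definition lambda_min_ge :: "('a, 'b) hgraph_scheme \<Rightarrow> real \<Rightarrow> bool" where
  "lambda_min_ge H c \<longleftrightarrow> (\<forall>\<mu>. is_eigenvalue_B H \<mu> \<longrightarrow> c \<le> \<mu>)"

definition decomposition :: "('a, 'b) hgraph_scheme \<Rightarrow> 'a set list \<Rightarrow> bool" where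
  "decomposition H Ws \<longleftrightarrow>
     (\<forall>W\<in>set Ws. W \<subseteq> verts H \<and> hoffman_graph (induced H W)) \<and>
     (\<Union>(set Ws)) = verts H \<and>
     (\<forall>i<length Ws. \<forall>j<length Ws. i \<noteq> j \<longrightarrow>
         slimv (induced H (Ws!i)) \<inter> slimv (induced H (Ws!j)) = {}) \<and>
     (\<forall>i<length Ws. \<forall>x\<in>slimv (induced H (Ws!i)). fat_nbrs H x \<subseteq> Ws!i) \<and>
     (\<forall>i<length Ws. \<forall>j<length Ws. i \<noteq> j \<longrightarrow>
        (\<forall>x\<in>slimv (induced H (Ws!i)). \<forall>y\<in>slimv (induced H (Ws!j)).
           card (fat_nbrs H x \<inter> fat_nbrs H y) \<le> 1 \<and>
           (card (fat_nbrs H x \<inter> fat_nbrs H y) = 1 \<longleftrightarrow> adj H x y)))"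

definition indecomposable :: "('a, 'b) hgraph_scheme \<Rightarrow> bool" where
  "indecomposable H \<longleftrightarrow> \<not> (\<exists>Ws. length Ws \<ge> 2 \<and> decomposition H Ws)"

definition hiso :: "('a, 'b) hgraph_scheme \<Rightarrow> ('c, 'd) hgraph_scheme \<Rightarrow> bool" where
  "hiso H K \<longleftrightarrow> (\<exists>\<phi>. bij_betw \<phi> (verts H) (verts K) \<and>
     (\<forall>x\<in>verts H. \<forall>y\<in>verts H. adj H x y \<longleftrightarrow> adj K (\<phi> x) (\<phi> y)) \<and>
     (\<forall>x\<in>verts H. x \<in> fatv H \<longleftrightarrow> \<phi> x \<in> fatv K))"

datatype hv = SV nat | FV nat

definition mk_hg :: "hv set \<Rightarrow> (hv \<times> hv) list \<Rightarrow> hv hgraph" where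
  "mk_hg V es = \<lparr>verts = V, adj = (\<lambda>x y. (x, y) \<in> set es \<or> (y, x) \<in> set es),
                 fatv = {v \<in> V. \<exists>n. v = FV n}\<rparr>"

definition H_I :: "hv hgraph" where
  "H_I = mk_hg {SV 1, FV 1} [(SV 1, FV 1)]"
definition H_II :: "hv hgraph" where
  "H_II = mk_hg {SV 1, FV 1, FV 2} [(SV 1, FV 1), (SV 1, FV 2)]"
definition H_III :: "hv hgraph" where
  "H_III = mk_hg {SV 1, SV 2, FV 1} [(SV 1, FV 1), (SV 2, FV 1)]"
definition H_IV :: "hv hgraph" where
  "H_IV = mk_hg {SV 1, SV 2, FV 1, FV 2} [(SV 1, SV 2), (SV 1, FV 1), (SV 2, FV 2)]"
definition H_XVI :: "hv hgraph" where
  "H_XVI = mk_hg {SV 1, SV 2, FV 1, FV 2, FV 3}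
     [(SV 1, SV 2), (SV 1, FV 1), (SV 1, FV 2), (SV 2, FV 3)]"
definition H_XVII :: "hv hgraph" where
  "H_XVII = mk_hg {SV 1, SV 2, FV 1, FV 2} [(SV 1, FV 1), (SV 1, FV 2), (SV 2, FV 2)]"

end

theory Submission
  imports Defs
begin

lemma hiso_zip:
  assumes du: "distinct us" and dt: "distinct ts" and len: "length us = length ts"
    and vH: "verts H = set us" and vK: "verts K = set ts"
    and A: "\<forall>p\<in>set (zip us ts). \<forall>q\<in>set (zip us ts). adj H (fst p) (fst q) = adj K (snd p) (snd q)"
    and F: "\<forall>p\<in>set (zip us ts). (fst p \<in> fatv H) = (snd p \<in> fatv K)"
  shows "hiso H K"
proof -
  define \<phi> where "\<phi> u = the (map_of (zip us ts) u)" for u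
  have ph: "\<phi> (us!i) = ts!i" if "i < length us" for i
    using map_of_zip_nth[OF len du] that len by (simp add: \<phi>_def)
  have z: "(us!i, ts!i) \<in> set (zip us ts)" if "i < length us" for i
    using that len by (auto simp: set_zip)
  have inj: "inj_on \<phi> (set us)"
  proof (rule inj_onI)
    fix u v assume "u \<in> set us" "v \<in> set us" "\<phi> u = \<phi> v"
    then obtain i j where "i < length us" "j < length us" "u = us!i" "v = us!j" "\<phi> u = \<phi> v"
      by (auto simp: in_set_conv_nth)
    then show "u = v" using ph dt len nth_eq_iff_index_eq by metis
  qed
  have img: "\<phi> ` set us = set ts"
  proof
    show "\<phi> ` set us \<subseteq> set ts"
    proof
      fix t assume "t \<in> \<phi> ` set us"
      then obtain i where "i < length us" "t = \<phi> (us!i)" by (auto simp: in_set_conv_nth)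
      then show "t \<in> set ts" using ph len by (metis nth_mem)
    qed
    show "set ts \<subseteq> \<phi> ` set us"
    proof
      fix t assume "t \<in> set ts"
      then obtain i where "i < length us" "t = ts!i" using len by (auto simp: in_set_conv_nth)
      then show "t \<in> \<phi> ` set us" using ph by (metis image_eqI nth_mem)
    qed
  qed
  show ?thesis unfolding hiso_def
  proof (intro exI conjI ballI)
    show "bij_betw \<phi> (verts H) (verts K)" using inj img vH vK by (simp add: bij_betw_def)
  next
    fix u v assume "u \<in> verts H" "v \<in> verts H"
    then obtain i j where "i < length us" "j < length us" "u = us!i" "v = us!j"
      using vH by (auto simp: in_set_conv_nth)
    then show "adj H u v = adj K (\<phi> u) (\<phi> v)" using A[rule_format, OF z z] ph by simp
  next
    fix u assume "u \<in> verts H"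
    then obtain i where "i < length us" "u = us!i"
      using vH by (auto simp: in_set_conv_nth)
    then show "(u \<in> fatv H) = (\<phi> u \<in> fatv K)" using F[rule_format, OF z] ph by simp
  qed
qed

lemma sqrt5_lt3: "sqrt 5 < (3::real)"
proof -
  have "(sqrt 5)^2 < (3::real)^2" by simp
  then show ?thesis using power_less_imp_less_base[of "sqrt 5" 2 3] by simp
qed

lemma eig2:
  assumes S: "slimv H = {x, y}" and xy: "x \<noteq> y"
    and bxx: "Bmat H x x = - a" and bxy: "Bmat H x y = d" and byx: "Bmat H y x = d"
    and byy: "Bmat H y y = - b" and d0: "d \<noteq> 0"
  shows "is_eigenvalue_B H ((- (a + b) - sqrt ((a - b)^2 + 4 * d^2)) / 2)"
proof -
  define s where "s = sqrt ((a - b)^2 + 4 * d^2)"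
  define \<mu> where "\<mu> = (- (a + b) - s) / 2"
  have s2: "s^2 = (a - b)^2 + 4 * d^2" unfolding s_def by simp
  have key: "(\<mu> + a) * (\<mu> + b) = d^2"
  proof -
    have "(\<mu> + a) * (\<mu> + b) = (s^2 - (a - b)^2) / 4"
      unfolding \<mu>_def by (simp add: field_simps power2_eq_square)
    then show ?thesis using s2 by simp
  qed
  define v where "v z = (if z = x then d else \<mu> + a)" for z
  have "\<forall>z\<in>slimv H. (\<Sum>w\<in>slimv H. Bmat H z w * v w) = \<mu> * v z"
  proof
    fix z assume "z \<in> slimv H"
    then have "z = x \<or> z = y" using S by auto
    then show "(\<Sum>w\<in>slimv H. Bmat H z w * v w) = \<mu> * v z"
    proof
      assume z: "z = x"
      show ?thesis using xy unfolding S z v_def by (simp add: bxx bxy algebra_simps)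
    next
      assume z: "z = y"
      have "d * d + - b * (\<mu> + a) = \<mu> * (\<mu> + a)" using key
        by (simp add: algebra_simps power2_eq_square)
      then show ?thesis using xy unfolding S z v_def by (simp add: byx byy)
    qed
  qed
  moreover have "\<exists>z\<in>slimv H. v z \<noteq> 0" using S d0 by (auto simp: v_def)
  ultimately show ?thesis unfolding is_eigenvalue_B_def \<mu>_def s_def by blast
qed

lemma eig_lt:
  fixes a b d :: real
  assumes "a + b \<ge> 4" "d^2 \<ge> 1"
  shows "(- (a + b) - sqrt ((a - b)^2 + 4 * d^2)) / 2 < -1 - (1 + sqrt 5) / 2"
proof -
  have h: "0 \<le> (a - b)^2" by simp
  have "4 \<le> (a - b)^2 + 4 * d^2" using h assms(2) by linarith
  then have "(2::real)^2 \<le> (a - b)^2 + 4 * d^2" by simp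
  then have "2 \<le> sqrt ((a - b)^2 + 4 * d^2)" by (rule real_le_rsqrt)
  then have "- (a + b) - sqrt ((a - b)^2 + 4 * d^2) \<le> -6" using assms by linarith
  moreover have "-6 < - 2 - (1 + sqrt 5)" using sqrt5_lt3 by linarith
  ultimately have "- (a + b) - sqrt ((a - b)^2 + 4 * d^2) < - 2 - (1 + sqrt 5)" by linarith
  then show ?thesis by (simp add: field_simps)
qed

lemma hg_basic:
  assumes "hoffman_graph H"
  shows "finite (verts H)" "fatv H \<subseteq> verts H" "verts H = slimv H \<union> fatv H"
    "\<And>x y. adj H x y \<Longrightarrow> adj H y x" "\<And>x. \<not> adj H x x"
    "\<And>f. f \<in> fatv H \<Longrightarrow> \<exists>x\<in>slimv H. adj H x f"
    "\<And>f g. f \<in> fatv H \<Longrightarrow> g \<in> fatv H \<Longrightarrow> \<not> adj H f g"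
    "\<And>x. fat_nbrs H x \<subseteq> fatv H" "\<And>x. finite (fat_nbrs H x)"
    "\<And>x. x \<in> slimv H \<Longrightarrow> x \<notin> fatv H"
    "\<And>x f. f \<in> fatv H \<Longrightarrow> adj H x f = (f \<in> fat_nbrs H x)"
    "\<And>x f. f \<in> fatv H \<Longrightarrow> adj H f x = (f \<in> fat_nbrs H x)"
  using assms unfolding hoffman_graph_def slimv_def fat_nbrs_def
  apply (auto intro: finite_subset)
  by metis

lemma one_slim:
  assumes hg: "hoffman_graph H" and fh: "fat_hoffman H"
    and lm: "lambda_min_ge H (-1 - (1 + sqrt 5) / 2)"
    and S: "slimv H = {x}"
  shows "hiso H H_I \<or> hiso H H_II"
proof -
  note b = hg_basic[OF hg]
  define F where "F = fat_nbrs H x"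
  have fatF: "fatv H = F"
  proof
    show "fatv H \<subseteq> F"
    proof
      fix f assume f: "f \<in> fatv H"
      then obtain z where "z \<in> slimv H" "adj H z f" using b(6) by blast
      then show "f \<in> F" using S f b(11) F_def by auto
    qed
    show "F \<subseteq> fatv H" using b(8) F_def by auto
  qed
  have vH: "verts H = insert x F" using b(3) S fatF by auto
  have xF: "x \<notin> F" using b(10) S fatF by auto
  have finF: "finite F" using b(9) F_def by auto
  have Fne: "F \<noteq> {}" using fh S unfolding fat_hoffman_def F_def by auto
  have "is_eigenvalue_B H (- real (card F))"
    unfolding is_eigenvalue_B_def
    by (rule exI[of _ "\<lambda>_. 1"]) (simp add: S Bmat_def b(5) F_def)
  then have "-1 - (1 + sqrt 5) / 2 \<le> - real (card F)" using lm lambda_min_ge_def by blast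
  then have "2 * real (card F) \<le> 3 + sqrt 5" by (simp add: field_simps)
  then have "real (card F) < 3" using sqrt5_lt3 by linarith
  then have "card F < 3" by simp
  moreover have "card F \<ge> 1" using Fne finF by (simp add: Suc_le_eq card_gt_0_iff)
  ultimately have "card F = 1 \<or> card F = 2" by linarith
  then show ?thesis
  proof
    assume "card F = 1"
    then obtain f where Ff: "F = {f}" by (auto simp: card_Suc_eq)
    have "hiso H H_I"
      apply (rule hiso_zip[where us="[x,f]" and ts="[SV 1, FV 1]"])
      using xF Ff vH fatF b(5) b(11)[of f x] b(12)[of f x]
      by (auto simp: H_I_def mk_hg_def F_def)
    then show ?thesis ..
  next
    assume "card F = 2"
    then obtain f g where Ff: "F = {f, g}" "f \<noteq> g" by (meson card_2_iff)
    have "hiso H H_II"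
      apply (rule hiso_zip[where us="[x,f,g]" and ts="[SV 1, FV 1, FV 2]"])
      using xF Ff vH fatF b(5) b(11)[of f x] b(12)[of f x] b(11)[of g x] b(12)[of g x] b(7)[of f g] b(7)[of g f]
      by (auto simp: H_II_def mk_hg_def F_def)
    then show ?thesis ..
  qed
qed

lemma star_sub:
  assumes hg: "hoffman_graph H" and x: "x \<in> slimv H"
  shows "hoffman_graph (induced H (insert x (fat_nbrs H x)))"
    "slimv (induced H (insert x (fat_nbrs H x))) = {x}"
proof -
  note b = hg_basic[OF hg]
  have xv: "x \<in> verts H" "x \<notin> fatv H" using x b(10) unfolding slimv_def by auto
  show "slimv (induced H (insert x (fat_nbrs H x))) = {x}"
    using xv b(8) unfolding slimv_def induced_def by auto
  then have sl: "slimv (induced H (insert x (fat_nbrs H x))) = {x}" .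
  have fx: "\<And>f. f \<in> fat_nbrs H x \<Longrightarrow> adj H f x"
    using b(8) b(12) by blast
  show "hoffman_graph (induced H (insert x (fat_nbrs H x)))"
    unfolding hoffman_graph_def
  proof (intro conjI)
    show "\<forall>f\<in>fatv (induced H (insert x (fat_nbrs H x))).
       \<exists>z\<in>slimv (induced H (insert x (fat_nbrs H x))). adj (induced H (insert x (fat_nbrs H x))) f z"
      unfolding sl using xv fx by (auto simp: induced_def)
  qed (use b(9) b(4) b(5) b(7) in \<open>auto simp: induced_def\<close>)
qed

lemma all_lt2: "(\<forall>i<(2::nat). P i) = (P 0 \<and> P 1)"
  by (auto simp: less_2_cases_iff)

lemma decomp2:
  assumes hg: "hoffman_graph H" and S: "slimv H = {x, y}" and xy: "x \<noteq> y"
    and c1: "card (fat_nbrs H x \<inter> fat_nbrs H y) \<le> 1"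
    and c2: "card (fat_nbrs H x \<inter> fat_nbrs H y) = 1 \<longleftrightarrow> adj H x y"
  shows "decomposition H [insert x (fat_nbrs H x), insert y (fat_nbrs H y)]"
proof -
  note b = hg_basic[OF hg]
  have xs: "x \<in> slimv H" and ys: "y \<in> slimv H" using S by auto
  note sx = star_sub[OF hg xs] and sy = star_sub[OF hg ys]
  have c1': "card (fat_nbrs H y \<inter> fat_nbrs H x) \<le> 1"
   and c2': "card (fat_nbrs H y \<inter> fat_nbrs H x) = 1 \<longleftrightarrow> adj H y x"
    using c1 c2 b(4) by (auto simp: Int_commute)
  have fatU: "fatv H = fat_nbrs H x \<union> fat_nbrs H y"
  proof
    show "fatv H \<subseteq> fat_nbrs H x \<union> fat_nbrs H y"
    proof
      fix f assume f: "f \<in> fatv H"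
      then obtain z where "z \<in> slimv H" "adj H z f" using b(6) by blast
      then show "f \<in> fat_nbrs H x \<union> fat_nbrs H y" using S f b(11) by auto
    qed
    show "fat_nbrs H x \<union> fat_nbrs H y \<subseteq> fatv H" using b(8) by auto
  qed
  have vH: "verts H = {x, y} \<union> fat_nbrs H x \<union> fat_nbrs H y" using b(3) S fatU by auto
  have sub: "insert x (fat_nbrs H x) \<subseteq> verts H" "insert y (fat_nbrs H y) \<subseteq> verts H"
    using vH by auto
  have L: "length [insert x (fat_nbrs H x), insert y (fat_nbrs H y)] = 2" by simp
  have N: "[insert x (fat_nbrs H x), insert y (fat_nbrs H y)] ! 0 = insert x (fat_nbrs H x)"
     "[insert x (fat_nbrs H x), insert y (fat_nbrs H y)] ! 1 = insert y (fat_nbrs H y)" by simp_all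
  show ?thesis unfolding decomposition_def L all_lt2 N sx(2) sy(2)
  proof (intro conjI)
    show "\<Union> (set [insert x (fat_nbrs H x), insert y (fat_nbrs H y)]) = verts H"
      using vH by auto
  qed (use sx sy sub xy c1 c2 c1' c2' in auto)
qed

lemma fat_nbrs_fat: "hoffman_graph H \<Longrightarrow> f \<in> fatv H \<Longrightarrow> fat_nbrs H f = {}"
  unfolding hoffman_graph_def fat_nbrs_def by auto

lemma two_slim:
  assumes hg: "hoffman_graph H" and fh: "fat_hoffman H" and ind: "indecomposable H"
    and lm: "lambda_min_ge H (-1 - (1 + sqrt 5) / 2)"
    and S: "slimv H = {x, y}" and xy: "x \<noteq> y"
    and ab: "card (fat_nbrs H y) \<le> card (fat_nbrs H x)"
  shows "hiso H H_III \<or> hiso H H_IV \<or> hiso H H_XVI \<or> hiso H H_XVII"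
proof -
  note b = hg_basic[OF hg]
  define Fx where "Fx = fat_nbrs H x"
  define Fy where "Fy = fat_nbrs H y"
  define c where "c = card (Fx \<inter> Fy)"
  have xs: "x \<in> slimv H" and ys: "y \<in> slimv H" using S by auto
  have xf: "x \<notin> fatv H" and yf: "y \<notin> fatv H" using b(10) xs ys by auto
  have fatU: "fatv H = Fx \<union> Fy"
  proof
    show "fatv H \<subseteq> Fx \<union> Fy"
    proof
      fix f assume f: "f \<in> fatv H"
      then obtain z where "z \<in> slimv H" "adj H z f" using b(6) by blast
      then show "f \<in> Fx \<union> Fy" using S f b(11) Fx_def Fy_def by auto
    qed
    show "Fx \<union> Fy \<subseteq> fatv H" using b(8) Fx_def Fy_def by auto
  qed
  have vH: "verts H = {x, y} \<union> Fx \<union> Fy" using b(3) S fatU by auto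
  have finx: "finite Fx" and finy: "finite Fy" using b(9) Fx_def Fy_def by auto
  have nd: "\<not> (c \<le> 1 \<and> (c = 1 \<longleftrightarrow> adj H x y))"
  proof
    assume "c \<le> 1 \<and> (c = 1 \<longleftrightarrow> adj H x y)"
    then have "decomposition H [insert x (fat_nbrs H x), insert y (fat_nbrs H y)]"
      using decomp2[OF hg S xy] c_def Fx_def Fy_def by auto
    then show False using ind unfolding indecomposable_def by force
  qed
  define d :: real where "d = (if adj H x y then 1 else 0) - real c"
  have bxx: "Bmat H x x = - real (card Fx)" using b(5) by (simp add: Bmat_def Fx_def)
  have byy: "Bmat H y y = - real (card Fy)" using b(5) by (simp add: Bmat_def Fy_def)
  have bxy: "Bmat H x y = d" by (simp add: Bmat_def d_def c_def Fx_def Fy_def)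
  have byx: "Bmat H y x = d" using b(4)[of x y] b(4)[of y x]
    by (auto simp: Bmat_def d_def c_def Fx_def Fy_def Int_commute)
  have dabs: "1 \<le> \<bar>d\<bar>" using nd unfolding d_def by (cases "adj H x y") auto
  then have d0: "d \<noteq> 0" by auto
  have d2: "1 \<le> d^2"
  proof -
    have "1 \<le> \<bar>d\<bar>^2" using dabs one_le_power by blast
    then show ?thesis by simp
  qed
  have ab3: "card Fx + card Fy \<le> 3"
  proof (rule ccontr)
    assume "\<not> ?thesis"
    then have "4 \<le> real (card Fx) + real (card Fy)" by linarith
    then have lt: "(- (real (card Fx) + real (card Fy)) - sqrt ((real (card Fx) - real (card Fy))^2 + 4 * d^2)) / 2
       < -1 - (1 + sqrt 5) / 2" using eig_lt d2 by blast
    have "is_eigenvalue_B H ((- (real (card Fx) + real (card Fy)) - sqrt ((real (card Fx) - real (card Fy))^2 + 4 * d^2)) / 2)"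
      by (rule eig2[OF S xy bxx bxy byx]) (use byy d0 in auto)
    then show False using lm lt unfolding lambda_min_ge_def by force
  qed
  have ney: "Fy \<noteq> {}" using fh ys unfolding fat_hoffman_def Fy_def by auto
  then have b1: "card Fy \<ge> 1" using finy by (simp add: Suc_le_eq card_gt_0_iff)
  have cb: "c \<le> card Fy" unfolding c_def using finy by (simp add: card_mono)
  have ab': "card Fy \<le> card Fx" using ab Fx_def Fy_def by simp
  have by1: "card Fy = 1" using ab' ab3 b1 by linarith
  then obtain g where Fyg: "Fy = {g}" by (auto simp: card_Suc_eq)
  have ce: "(c = 1 \<and> \<not> adj H x y) \<or> (c = 0 \<and> adj H x y)" using nd cb by1 by auto
  have ax: "card Fx = 1 \<or> card Fx = 2" using ab' ab3 by1 by linarith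
  have gf: "g \<in> fatv H" using fatU Fyg by auto
  note simps = xf yf xy b(5) b(7) b(11) b(12) fat_nbrs_fat[OF hg] gf
  show ?thesis using ax
  proof
    assume "card Fx = 1"
    then obtain f where Fxf: "Fx = {f}" by (auto simp: card_Suc_eq)
    have ff: "f \<in> fatv H" using fatU Fxf by auto
    show ?thesis using ce
    proof
      assume ce1: "c = 1 \<and> \<not> adj H x y"
      then have fg: "f = g" using Fxf Fyg c_def by (cases "f = g") auto
      have "hiso H H_III"
        apply (rule hiso_zip[where us="[x,y,f]" and ts="[SV 1, SV 2, FV 1]"])
        using ce1 fg Fxf Fyg vH ff simps b(4)[of y x]
        by (auto simp: H_III_def mk_hg_def Fx_def Fy_def)
      then show ?thesis by blast
    next
      assume ce1: "c = 0 \<and> adj H x y"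
      then have fg: "f \<noteq> g" using Fxf Fyg c_def by auto
      have "hiso H H_IV"
        apply (rule hiso_zip[where us="[x,y,f,g]" and ts="[SV 1, SV 2, FV 1, FV 2]"])
        using ce1 fg Fxf Fyg vH ff simps b(4)[of x y]
        by (auto simp: H_IV_def mk_hg_def Fx_def Fy_def)
      then show ?thesis by blast
    qed
  next
    assume "card Fx = 2"
    then obtain f1 f2 where Fxf: "Fx = {f1, f2}" "f1 \<noteq> f2" by (meson card_2_iff)
    have ff: "f1 \<in> fatv H" "f2 \<in> fatv H" using fatU Fxf by auto
    show ?thesis using ce
    proof
      assume ce1: "c = 1 \<and> \<not> adj H x y"
      then have "g \<in> Fx" using Fxf Fyg c_def by (cases "g \<in> Fx") auto
      then have "g = f1 \<or> g = f2" using Fxf by auto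
      then show ?thesis
      proof
        assume fg: "g = f1"
        have "hiso H H_XVII"
          apply (rule hiso_zip[where us="[x,y,f2,f1]" and ts="[SV 1, SV 2, FV 1, FV 2]"])
          using ce1 fg Fxf Fyg vH ff simps b(4)[of y x]
          by (auto simp: H_XVII_def mk_hg_def Fx_def Fy_def)
        then show ?thesis by blast
      next
        assume fg: "g = f2"
        have "hiso H H_XVII"
          apply (rule hiso_zip[where us="[x,y,f1,f2]" and ts="[SV 1, SV 2, FV 1, FV 2]"])
          using ce1 fg Fxf Fyg vH ff simps b(4)[of y x]
          by (auto simp: H_XVII_def mk_hg_def Fx_def Fy_def)
        then show ?thesis by blast
      qed
    next
      assume ce1: "c = 0 \<and> adj H x y"
      then have fg: "g \<noteq> f1" "g \<noteq> f2" using Fxf Fyg c_def by auto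
      have "hiso H H_XVI"
        apply (rule hiso_zip[where us="[x,y,f1,f2,g]" and ts="[SV 1, SV 2, FV 1, FV 2, FV 3]"])
        using ce1 fg Fxf Fyg vH ff simps b(4)[of x y]
        by (auto simp: H_XVI_def mk_hg_def Fx_def Fy_def)
      then show ?thesis by blast
    qed
  qed
qed

theorem mainTheorem15:
  fixes H :: "'a hgraph"
  assumes "hoffman_graph H"
    and "fat_hoffman H"
    and "indecomposable H"
    and "lambda_min_ge H (-1 - (1 + sqrt 5) / 2)"
    and "card (slimv H) \<le> 2"
  shows "hiso H H_I \<or> hiso H H_II \<or> hiso H H_III \<or> hiso H H_IV \<or>
         hiso H H_XVI \<or> hiso H H_XVII"
proof -
  note b = hg_basic[OF assms(1)]
  have fin: "finite (slimv H)" using b(1) unfolding slimv_def by auto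
  have ne: "slimv H \<noteq> {}"
  proof
    assume e: "slimv H = {}"
    then have "fatv H = {}" using b(6) by blast
    then show False using e b(3) assms(1) unfolding hoffman_graph_def by auto
  qed
  then have "card (slimv H) \<noteq> 0" using fin by simp
  then have "card (slimv H) = 1 \<or> card (slimv H) = 2" using assms(5) by linarith
  then show ?thesis
  proof
    assume "card (slimv H) = 1"
    then obtain x where "slimv H = {x}" by (auto simp: card_Suc_eq)
    then show ?thesis using one_slim[OF assms(1,2,4)] by blast
  next
    assume "card (slimv H) = 2"
    then obtain x y where S: "slimv H = {x, y}" "x \<noteq> y" by (meson card_2_iff)
    show ?thesis
    proof (cases "card (fat_nbrs H y) \<le> card (fat_nbrs H x)")
      case True
      then show ?thesis using two_slim[OF assms(1-4) S True] by blast
    next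
      case False
      have S': "slimv H = {y, x}" using S by auto
      from False have "card (fat_nbrs H x) \<le> card (fat_nbrs H y)" by simp
      then show ?thesis using two_slim[OF assms(1-4) S' _] S(2) by blast
    qed
  qed
qed

end
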